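(* Let $L=\langle S,A,\to\rangle$ be a labelled transition system. For all $x,y,z\in\{o,b\}$ and all $s,t\in S$: $s\le_{(z,x)}t$ if and only if $s\le_{(z,y)}t$.
   Context: An LTS is $\langle S,A,\to\rangle$ with states $S$, actions $A$ containing the internal action $\tau$, and $\to\subseteq S\times A\times S$; write $s\xrightarrow{a}t$, and $\twoheadrightarrow$ for the reflexive-transitive closure of $\xrightarrow{\tau}$. For $R\subseteq S\times S$ and $s,s',t$: $s\twoheadrightarrow_{o,R,t}s'$ iff $s\twoheadrightarrow s'$; $s\twoheadrightarrow_{b,R,t}s'$ iff $s\twoheadrightarrow s'$, $t\,R\,s$ and $t\,R\,s'$. For $x,y\in\{o,b\}$, a (not necessarily symmetric) relation $R\subseteq S\times S$ is an $(x,y)$-generic simulation if whenever $s\,R\,t$ and $s\xrightarrow{a}s'$, either $a=\tau$ and $s'\,R\,t$, or there exist $t',t_1,t_2$ with $t\twoheadrightarrow_{x,R,s}t_1\xrightarrow{a}t_2\twoheadrightarrow_{y,R,s'}t'$ and $s'\,R\,t'$. Write $s\le_{(x,y)}t$ iff there is an $(x,y)$-generic simulation $R$ with $s\,R\,t$. *)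

theory Defs
  imports Main
begin

datatype mode = ModeO | ModeB

definition tau_steps :: "('s \<Rightarrow> 'a \<Rightarrow> 's \<Rightarrow> bool) \<Rightarrow> 'a \<Rightarrow> 's \<Rightarrow> 's \<Rightarrow> bool" where
  "tau_steps tr tau = (\<lambda>s t. tr s tau t)\<^sup>*\<^sup>*"

definition mstep ::
  "('s \<Rightarrow> 'a \<Rightarrow> 's \<Rightarrow> bool) \<Rightarrow> 'a \<Rightarrow> mode \<Rightarrow> ('s \<Rightarrow> 's \<Rightarrow> bool) \<Rightarrow> 's \<Rightarrow> 's \<Rightarrow> 's \<Rightarrow> bool" where
  "mstep tr tau x R t s s' =
     (case x of
        ModeO \<Rightarrow> tau_steps tr tau s s'
      | ModeB \<Rightarrow> tau_steps tr tau s s' \<and> R t s \<and> R t s')"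

definition generic_sim ::
  "('s \<Rightarrow> 'a \<Rightarrow> 's \<Rightarrow> bool) \<Rightarrow> 'a \<Rightarrow> mode \<Rightarrow> mode \<Rightarrow> ('s \<Rightarrow> 's \<Rightarrow> bool) \<Rightarrow> bool" where
  "generic_sim tr tau x y R =
     (\<forall>s t a s'. R s t \<longrightarrow> tr s a s' \<longrightarrow>
        ((a = tau \<and> R s' t) \<or>
         (\<exists>t' t1 t2. mstep tr tau x R s t t1 \<and> tr t1 a t2 \<and> mstep tr tau y R s' t2 t' \<and> R s' t')))"

definition gsim_le ::
  "('s \<Rightarrow> 'a \<Rightarrow> 's \<Rightarrow> bool) \<Rightarrow> 'a \<Rightarrow> mode \<Rightarrow> mode \<Rightarrow> 's \<Rightarrow> 's \<Rightarrow> bool" where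
  "gsim_le tr tau x y s t = (\<exists>R. generic_sim tr tau x y R \<and> R s t)"

end

theory Submission
  imports Defs
begin

lemma mstep_tau: "mstep tr tau x R t s s' \<Longrightarrow> tau_steps tr tau s s'"
  by (cases x) (auto simp: mstep_def)

lemma key:
  assumes G: "generic_sim tr tau z x R"
  shows "generic_sim tr tau z y (\<lambda>s u. \<exists>t. tau_steps tr tau u t \<and> R s t)"
  unfolding generic_sim_def
proof (intro allI impI)
  let ?R' = "\<lambda>s u. \<exists>t. tau_steps tr tau u t \<and> R s t"
  fix s u a s'
  assume "?R' s u" and st: "tr s a s'"
  then obtain t where ut: "tau_steps tr tau u t" and Rst: "R s t" by blast
  from G Rst st have
    "(a = tau \<and> R s' t) \<or> (\<exists>t' t1 t2. mstep tr tau z R s t t1 \<and> tr t1 a t2 \<and> mstep tr tau x R s' t2 t' \<and> R s' t')"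
    unfolding generic_sim_def by blast
  then show "(a = tau \<and> ?R' s' u) \<or>
         (\<exists>t' t1 t2. mstep tr tau z ?R' s u t1 \<and> tr t1 a t2 \<and> mstep tr tau y ?R' s' t2 t' \<and> ?R' s' t')"
  proof
    assume "a = tau \<and> R s' t" then show ?thesis using ut by blast
  next
    assume "\<exists>t' t1 t2. mstep tr tau z R s t t1 \<and> tr t1 a t2 \<and> mstep tr tau x R s' t2 t' \<and> R s' t'"
    then obtain t' t1 t2 where m1: "mstep tr tau z R s t t1" and tr1: "tr t1 a t2"
      and m2: "mstep tr tau x R s' t2 t'" and R2: "R s' t'" by blast
    have t2t': "tau_steps tr tau t2 t'" using mstep_tau[OF m2] .
    have tt1: "tau_steps tr tau t t1" using mstep_tau[OF m1] .
    have ut1: "tau_steps tr tau u t1" using ut tt1 unfolding tau_steps_def by auto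
    have M1: "mstep tr tau z ?R' s u t1"
    proof (cases z)
      case ModeO then show ?thesis using ut1 by (simp add: mstep_def)
    next
      case ModeB
      then have "R s t1" using m1 by (simp add: mstep_def)
      moreover have "tau_steps tr tau t1 t1" unfolding tau_steps_def by simp
      ultimately show ?thesis using ModeB ut1 ut Rst by (auto simp: mstep_def)
    qed
    have R2': "?R' s' t2" using t2t' R2 by blast
    have "tau_steps tr tau t2 t2" unfolding tau_steps_def by simp
    then have M2: "mstep tr tau y ?R' s' t2 t2" using R2' by (cases y) (auto simp: mstep_def)
    show ?thesis using M1 tr1 M2 R2' by blast
  qed
qed

theorem proposition6p13:
  fixes tr :: "'s \<Rightarrow> 'a \<Rightarrow> 's \<Rightarrow> bool" and tau :: 'a
    and x y z :: mode and s t :: 's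
  shows "gsim_le tr tau z x s t \<longleftrightarrow> gsim_le tr tau z y s t"
proof -
  have "gsim_le tr tau z y' s t" if "gsim_le tr tau z x' s t" for x' y'
  proof -
    from that obtain R where G: "generic_sim tr tau z x' R" and "R s t"
      unfolding gsim_le_def by blast
    moreover have "tau_steps tr tau t t" unfolding tau_steps_def by simp
    ultimately show ?thesis unfolding gsim_le_def using key[OF G, of y'] by blast
  qed
  then show ?thesis by blast
qed

end
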